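(* For the OG-PPP and the PLP-PPP with line intensity $\mu$ and vehicle intensity $\lambda$, the nearest-neighbor distance distribution of the typical vehicle of order $m\in\{2,4\}$ is $$F_R(r)=1-\exp\Bigl(-m\lambda r-2\mu\int_0^r\bigl(1-e^{-2\lambda\sqrt{r^2-u^2}}\bigr)\,\mathrm{d}u\Bigr),\qquad r\ge 0.$$
   Context: A line is $L(x,\varphi)=\{(a,b): a\cos\varphi+b\sin\varphi=x\}$. Line-based Poisson street system: $\{x_i\}$ a homogeneous PPP of intensity $\mu$ on $\mathbb{R}$ with i.i.d. orientations $\varphi_i\sim\nu$ on $[0,\pi)$, $\mathcal{S}=\bigcup_i L(x_i,\varphi_i)$; OG: $\nu=\tfrac12\delta_0+\tfrac12\delta_{\pi/2}$; PLP: $\nu$ uniform on $[0,\pi)$. OG-PPP / PLP-PPP: conditionally on the lines, vehicles form independent homogeneous 1D PPPs of intensity $\lambda$ on each line. Typical vehicle of order $m$: a vehicle at the origin $o$ lying on $m/2$ lines through $o$ ($m=2$: one line, a general vehicle; $m=4$: two distinct lines, an intersection vehicle); the configuration consists of these $m/2$ lines through $o$, each with an independent PPP of intensity $\lambda$, plus an independent copy of the stationary line process with its vehicles. The vehicle at $o$ is not counted. $F_R(r)$ is the probability that some other vehicle lies within distance $r$ of $o$. *)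

theory Defs
  imports "HOL-Probability.Probability"
begin

datatype street_model = OG | PLP

definition orient_law :: "street_model \<Rightarrow> real measure" where
  "orient_law s = (case s of
      OG \<Rightarrow> distr (measure_pmf (pmf_of_set {0, pi/2})) borel (\<lambda>x. x)
    | PLP \<Rightarrow> uniform_measure lborel {0..<pi})"

text \<open>Points of a homogeneous 1D Poisson process represented through its spacings:
  given gaps g (i.i.d. Exp(intensity)), the points are
  g 0, g 0 + g 1, ... on the positive half-line and -g(-1), -g(-1)-g(-2), ... on the
  negative half-line (point i for i in int).\<close>
definition ppp_point :: "(int \<Rightarrow> real) \<Rightarrow> int \<Rightarrow> real" where
  "ppp_point g i = (if 0 \<le> i then (\<Sum>j\<in>{0..i}. g j) else - (\<Sum>j\<in>{i..-1}. g j))"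

text \<open>Point at signed position t along the line L(x,phi) = {(a,b). a cos phi + b sin phi = x}.\<close>
definition line_point :: "real \<Rightarrow> real \<Rightarrow> real \<Rightarrow> real \<times> real" where
  "line_point x phi t = (x * cos phi - t * sin phi, x * sin phi + t * cos phi)"

text \<open>Index type of all the independent primitive random variables.\<close>
datatype rv_index =
    LineGap int            \<comment> \<open>spacings of the line PPP (intensity mu)\<close>
  | LineOrient int
  | VehGap int int         \<comment> \<open>spacings of the vehicle PPP on stationary line i\<close>
  | TypVehGap nat int      \<comment> \<open>spacings of the vehicle PPP on the j-th line through o\<close>

text \<open>All vehicles other than the typical one at o: the vehicles on the m/2 lines
  through o (orientations psi j) and the vehicles of the stationary street system.\<close>
definition other_vehicles ::
  "nat \<Rightarrow> (nat \<Rightarrow> real) \<Rightarrow> (int \<Rightarrow> real) \<Rightarrow> (int \<Rightarrow> real) \<Rightarrow> (int \<Rightarrow> int \<Rightarrow> real)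
     \<Rightarrow> (nat \<Rightarrow> int \<Rightarrow> real) \<Rightarrow> (real \<times> real) set" where
  "other_vehicles m psi G Phi V W =
     {line_point 0 (psi j) (ppp_point (W j) k) | j k. j < m div 2}
     \<union> {line_point (ppp_point G i) (Phi i) (ppp_point (V i) k) | i k. True}"

end

theory Submission
  imports Defs
begin

locale street = prob_space M for M :: "'a measure" +
  fixes X :: "rv_index \<Rightarrow> 'a \<Rightarrow> real"
  assumes ind: "indep_vars (\<lambda>_. borel) X UNIV"
begin

definition Xv :: "'a \<Rightarrow> rv_index \<Rightarrow> real" where "Xv \<omega> = (\<lambda>k. X k \<omega>)"

abbreviation "OM \<equiv> PiM (UNIV :: rv_index set) (\<lambda>_. (borel :: real measure))"

lemma X_meas[measurable]: "X k \<in> borel_measurable M"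
  using ind by (auto simp: indep_vars_def)

lemma Xv_meas[measurable]: "Xv \<in> measurable M OM"
  unfolding Xv_def by (rule measurable_PiM_single') auto

lemma peel:
  assumes F[measurable]: "F \<in> borel_measurable OM"
  shows "(\<integral>\<^sup>+\<omega>. F (Xv \<omega>) \<partial>M) = (\<integral>\<^sup>+\<omega>. (\<integral>\<^sup>+y. F ((Xv \<omega>)(i := y)) \<partial>distr M borel (X i)) \<partial>M)"
proof -
  define K where "K = (\<lambda>b::bool. if b then UNIV - {i} else {i})"
  have "indep_vars (\<lambda>b. PiM (K b) (\<lambda>_. borel)) (\<lambda>b \<omega>. restrict (\<lambda>k. X k \<omega>) (K b)) UNIV"
    by (rule indep_vars_restrict[OF ind]) (auto simp: K_def disjoint_family_on_def)
  then have "indep_var (PiM (K True) (\<lambda>_. borel)) (\<lambda>\<omega>. restrict (\<lambda>k. X k \<omega>) (K True))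
       (PiM (K False) (\<lambda>_. borel)) (\<lambda>\<omega>. restrict (\<lambda>k. X k \<omega>) (K False))"
    unfolding indep_var_def
    by (rule indep_vars_cong[THEN iffD1, rotated -1]) (auto split: bool.split)
  then have IV: "indep_var (PiM (UNIV - {i}) (\<lambda>_. borel)) (\<lambda>\<omega>. restrict (\<lambda>k. X k \<omega>) (UNIV - {i}))
       (PiM {i} (\<lambda>_. borel)) (\<lambda>\<omega>. restrict (\<lambda>k. X k \<omega>) {i})"
    by (simp add: K_def)
  define G where "G = (\<lambda>p::(rv_index \<Rightarrow> real) \<times> real. F (\<lambda>k. if k = i then snd p else fst p k))"
  have Gm[measurable]: "G \<in> borel_measurable (PiM (UNIV - {i}) (\<lambda>_. borel) \<Otimes>\<^sub>M borel)"
  proof -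
    have "(\<lambda>p::(rv_index \<Rightarrow> real) \<times> real. (\<lambda>k. if k = i then snd p else fst p k))
       \<in> measurable (PiM (UNIV - {i}) (\<lambda>_. borel) \<Otimes>\<^sub>M borel) OM"
    proof (rule measurable_PiM_single')
      fix k :: rv_index
      show "(\<lambda>p::(rv_index \<Rightarrow> real) \<times> real. if k = i then snd p else fst p k) \<in> borel_measurable (PiM (UNIV - {i}) (\<lambda>_. borel) \<Otimes>\<^sub>M borel)"
        by (cases "k = i") (auto intro!: measurable_compose[OF measurable_fst measurable_component_singleton])
    qed auto
    then show ?thesis unfolding G_def by measurable
  qed
  let ?P1 = "PiM (UNIV - {i}) (\<lambda>_. borel) :: (rv_index \<Rightarrow> real) measure"
  let ?P2 = "PiM {i} (\<lambda>_. borel) :: (rv_index \<Rightarrow> real) measure"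
  let ?R1 = "\<lambda>\<omega>. restrict (\<lambda>k. X k \<omega>) (UNIV - {i})"
  let ?R2 = "\<lambda>\<omega>. restrict (\<lambda>k. X k \<omega>) {i}"
  let ?D1 = "distr M ?P1 ?R1"
  let ?D2 = "distr M ?P2 ?R2"
  define G' where "G' = (\<lambda>p::(rv_index \<Rightarrow> real) \<times> (rv_index \<Rightarrow> real). G (fst p, snd p i))"
  have G'm[measurable]: "G' \<in> borel_measurable (?P1 \<Otimes>\<^sub>M ?P2)"
    unfolding G'_def by measurable
  interpret D2: prob_space ?D2 by (rule prob_space_distr) simp
  interpret DX: prob_space "distr M borel (X i)" by (rule prob_space_distr) simp
  have Gm': "G \<in> borel_measurable (?P1 \<Otimes>\<^sub>M distr M borel (X i))"
    using Gm by (subst measurable_cong_sets[OF sets_pair_measure_cong[OF refl sets_distr] refl])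
  have eq: "?D1 \<Otimes>\<^sub>M ?D2 = distr M (?P1 \<Otimes>\<^sub>M ?P2) (\<lambda>\<omega>. (?R1 \<omega>, ?R2 \<omega>))"
    using IV by (simp add: indep_var_distribution_eq)
  have inner: "(\<integral>\<^sup>+y. G' (x, y) \<partial>?D2) = (\<integral>\<^sup>+y. G (x, y) \<partial>distr M borel (X i))"
    if x: "x \<in> space ?P1" for x
  proof -
    have [measurable]: "(\<lambda>y. G (x, y)) \<in> borel_measurable borel" using x by measurable
    have [measurable]: "(\<lambda>y. G' (x, y)) \<in> borel_measurable ?P2" using x by measurable
    have "(\<integral>\<^sup>+y. G' (x, y) \<partial>?D2) = (\<integral>\<^sup>+\<omega>. G' (x, ?R2 \<omega>) \<partial>M)"
      by (subst nn_integral_distr) auto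
    also have "\<dots> = (\<integral>\<^sup>+\<omega>. G (x, X i \<omega>) \<partial>M)" by (simp add: G'_def)
    also have "\<dots> = (\<integral>\<^sup>+y. G (x, y) \<partial>distr M borel (X i))"
      by (subst nn_integral_distr) auto
    finally show ?thesis .
  qed
  have "(\<integral>\<^sup>+\<omega>. F (Xv \<omega>) \<partial>M) = (\<integral>\<^sup>+\<omega>. G' (?R1 \<omega>, ?R2 \<omega>) \<partial>M)"
    by (intro nn_integral_cong) (auto simp: G_def G'_def Xv_def intro!: arg_cong[where f=F])
  also have "\<dots> = (\<integral>\<^sup>+p. G' p \<partial>distr M (?P1 \<Otimes>\<^sub>M ?P2) (\<lambda>\<omega>. (?R1 \<omega>, ?R2 \<omega>)))"
    by (subst nn_integral_distr) auto
  also have "\<dots> = (\<integral>\<^sup>+p. G' p \<partial>(?D1 \<Otimes>\<^sub>M ?D2))" by (simp add: eq)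
  also have "\<dots> = (\<integral>\<^sup>+x. \<integral>\<^sup>+y. G' (x, y) \<partial>?D2 \<partial>?D1)"
    by (rule D2.nn_integral_fst[symmetric]) simp
  also have "\<dots> = (\<integral>\<^sup>+x. \<integral>\<^sup>+y. G (x, y) \<partial>distr M borel (X i) \<partial>?D1)"
    by (intro nn_integral_cong inner) simp
  also have "\<dots> = (\<integral>\<^sup>+\<omega>. \<integral>\<^sup>+y. G (?R1 \<omega>, y) \<partial>distr M borel (X i) \<partial>M)"
    using DX.borel_measurable_nn_integral_fst[OF Gm'] by (subst nn_integral_distr) auto
  also have "\<dots> = (\<integral>\<^sup>+\<omega>. (\<integral>\<^sup>+y. F ((Xv \<omega>)(i := y)) \<partial>distr M borel (X i)) \<partial>M)"
    by (intro nn_integral_cong) (auto simp: G_def Xv_def intro!: arg_cong[where f=F])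
  finally show ?thesis .
qed

end

definition cd :: "real \<Rightarrow> real \<Rightarrow> real" where "cd r s = sqrt (r\<^sup>2 - s\<^sup>2)"
definition good :: "real \<Rightarrow> real \<Rightarrow> real \<Rightarrow> real \<Rightarrow> bool" where
  "good r s a b = (s\<^sup>2 \<le> r\<^sup>2 \<longrightarrow> cd r s < a \<and> cd r s < b)"
definition psum :: "(nat \<Rightarrow> rv_index) \<Rightarrow> (rv_index \<Rightarrow> real) \<Rightarrow> nat \<Rightarrow> real" where
  "psum g x n = (\<Sum>j<n. x (g j))"
definition Hn :: "real \<Rightarrow> (nat \<Rightarrow> rv_index) \<Rightarrow> (nat \<Rightarrow> rv_index) \<Rightarrow> (nat \<Rightarrow> rv_index) \<Rightarrow> (rv_index \<Rightarrow> real) \<Rightarrow> nat \<Rightarrow> bool" where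
  "Hn r g v0 v1 x n = (\<forall>i<n. good r (psum g x (Suc i)) (x (v0 i)) (x (v1 i)))"
definition phi :: "real \<Rightarrow> real \<Rightarrow> real \<Rightarrow> real" where
  "phi lam r s = (if s\<^sup>2 \<le> r\<^sup>2 then exp (- cd r s * lam) * exp (- cd r s * lam) else 1)"
definition Top :: "real \<Rightarrow> real \<Rightarrow> real \<Rightarrow> (real \<Rightarrow> ennreal) \<Rightarrow> real \<Rightarrow> ennreal" where
  "Top mu lam r w a = (\<integral>\<^sup>+y. ennreal (phi lam r (a + y)) * w (a + y) \<partial>density lborel (exponential_density mu))"

lemma cd_meas[measurable]: "cd r \<in> borel_measurable borel"
  unfolding cd_def by measurable
lemma phi_meas[measurable]: "phi lam r \<in> borel_measurable borel"
  unfolding phi_def by measurable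
lemma psum_meas[measurable]: "(\<lambda>x. psum g x n) \<in> borel_measurable (PiM UNIV (\<lambda>_. borel))"
  unfolding psum_def by measurable
lemma good_meas[measurable]:
  assumes [measurable]: "f \<in> borel_measurable N" "a \<in> borel_measurable N" "b \<in> borel_measurable N"
  shows "Measurable.pred N (\<lambda>x. good r (f x) (a x) (b x))"
  unfolding good_def by measurable
lemma Hn_meas[measurable]: "Measurable.pred (PiM UNIV (\<lambda>_. borel)) (\<lambda>x. Hn r g v0 v1 x n)"
  unfolding Hn_def by measurable

lemma Top_meas[measurable]:
  assumes [measurable]: "w \<in> borel_measurable borel" and mu: "0 < mu"
  shows "Top mu lam r w \<in> borel_measurable borel"
proof -
  interpret D: prob_space "density lborel (exponential_density mu)"
    using prob_space_exponential_density[OF mu] .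
  have "(\<lambda>p::real\<times>real. ennreal (phi lam r (fst p + snd p)) * w (fst p + snd p))
     \<in> borel_measurable (borel \<Otimes>\<^sub>M density lborel (exponential_density mu))"
    by (subst measurable_cong_sets[OF sets_pair_measure_cong[OF refl sets_density] refl]) measurable
  from D.borel_measurable_nn_integral_fst[OF this] show ?thesis
    unfolding Top_def[abs_def] by simp
qed

lemma psum_upd: "k \<notin> g ` {..<n} \<Longrightarrow> psum g (x(k := y)) n = psum g x n"
  unfolding psum_def by (intro sum.cong) auto

lemma Hn_upd: "k \<notin> g ` {..<n} \<Longrightarrow> k \<notin> v0 ` {..<n} \<Longrightarrow> k \<notin> v1 ` {..<n} \<Longrightarrow>
   Hn r g v0 v1 (x(k := y)) n = Hn r g v0 v1 x n"
proof -
  assume a: "k \<notin> g ` {..<n}" "k \<notin> v0 ` {..<n}" "k \<notin> v1 ` {..<n}"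
  have "\<And>i. i < n \<Longrightarrow> psum g (x(k := y)) (Suc i) = psum g x (Suc i)"
    using a(1) by (intro psum_upd) auto
  then show ?thesis using a unfolding Hn_def by auto
qed

context street begin

lemma distr_exp:
  assumes "distributed M lborel (X k) (exponential_density l)"
  shows "distr M borel (X k) = density lborel (exponential_density l)"
proof -
  have "distr M borel (X k) = distr M lborel (X k)" by (rule distr_cong) auto
  with assms show ?thesis by (simp add: distributed_def)
qed

lemma tail_exp:
  assumes D: "distributed M lborel (X k) (exponential_density l)" and l: "0 < l" and d: "0 \<le> d"
  shows "emeasure (distr M borel (X k)) {d<..} = ennreal (exp (- d * l))"
proof -
  have "emeasure (distr M borel (X k)) {d<..} = emeasure M {x \<in> space M. d < X k x}"
    by (subst emeasure_distr) (auto intro!: arg_cong[where f="emeasure M"])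
  also have "\<dots> = ennreal (prob {x \<in> space M. d < X k x})"
    by (simp add: emeasure_eq_measure)
  also have "\<dots> = ennreal (exp (- d * l))"
    using exponential_distributedD_gt[OF D d l] by simp
  finally show ?thesis .
qed

lemma mark_step:
  assumes D: "distributed M lborel (X k) (exponential_density l)" and l: "0 < l" and d: "0 \<le> d"
  shows "(\<integral>\<^sup>+y. (if d < y then c else 0) \<partial>distr M borel (X k)) = c * ennreal (exp (- d * l))"
proof -
  have "(\<integral>\<^sup>+y. (if d < y then c else 0) \<partial>distr M borel (X k)) = (\<integral>\<^sup>+y. c * indicator {d<..} y \<partial>distr M borel (X k))"
    by (intro nn_integral_cong) (auto simp: indicator_def)
  also have "\<dots> = c * emeasure (distr M borel (X k)) {d<..}"
    by (rule nn_integral_cmult_indicator) simp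
  finally show ?thesis using tail_exp[OF D l d] by simp
qed

lemma distr_UNIV[simp]: "emeasure (distr M borel (X k)) UNIV = 1"
proof -
  interpret D: prob_space "distr M borel (X k)" by (rule prob_space_distr) simp
  show ?thesis using D.emeasure_space_1 by simp
qed

lemma const_step:
  "(\<integral>\<^sup>+y. c \<partial>distr M borel (X k)) = c"
proof -
  interpret D: prob_space "distr M borel (X k)" by (rule prob_space_distr) simp
  show ?thesis using D.emeasure_space_1 by simp
qed

lemma indep_step:
  assumes D: "distributed M lborel (X k) (exponential_density l)" and l: "0 < l" and d: "0 \<le> d"
    and Z[measurable]: "Z \<in> borel_measurable OM" and Zi: "\<And>x y. Z (x(k := y)) = Z x"
  shows "(\<integral>\<^sup>+\<omega>. Z (Xv \<omega>) * (if d < X k \<omega> then 1 else 0) \<partial>M) = (\<integral>\<^sup>+\<omega>. Z (Xv \<omega>) \<partial>M) * ennreal (exp (- d * l))"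
proof -
  have "(\<integral>\<^sup>+\<omega>. Z (Xv \<omega>) * (if d < X k \<omega> then 1 else 0) \<partial>M) = (\<integral>\<^sup>+\<omega>. (\<lambda>x. Z x * (if d < x k then 1 else 0)) (Xv \<omega>) \<partial>M)"
    by (simp add: Xv_def)
  also have "\<dots> = (\<integral>\<^sup>+\<omega>. (\<integral>\<^sup>+y. (if d < y then Z (Xv \<omega>) else 0) \<partial>distr M borel (X k)) \<partial>M)"
    by (subst peel[where i=k]) (auto simp: Zi intro!: nn_integral_cong)
  also have "\<dots> = (\<integral>\<^sup>+\<omega>. Z (Xv \<omega>) * ennreal (exp (- d * l)) \<partial>M)"
    by (simp add: mark_step[OF D l d])
  finally show ?thesis by (simp add: nn_integral_multc)
qed

end

locale street_line = street +
  fixes g v0 v1 :: "nat \<Rightarrow> rv_index" and mu lam r :: real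
  assumes mu: "0 < mu" and lam: "0 < lam" and r: "0 \<le> r"
    and inj: "inj g" "inj v0" "inj v1"
    and disj: "\<And>a b. g a \<noteq> v0 b" "\<And>a b. g a \<noteq> v1 b" "\<And>a b. v0 a \<noteq> v1 b"
    and Dg: "\<And>j. distributed M lborel (X (g j)) (exponential_density mu)"
    and Dv0: "\<And>j. distributed M lborel (X (v0 j)) (exponential_density lam)"
    and Dv1: "\<And>j. distributed M lborel (X (v1 j)) (exponential_density lam)"
begin

lemma disj': "v0 b \<noteq> g a" "v1 b \<noteq> g a" "v1 b \<noteq> v0 a"
  using disj by metis+

lemma cd_nonneg: "s\<^sup>2 \<le> r\<^sup>2 \<Longrightarrow> 0 \<le> cd r s"
  by (simp add: cd_def)

lemma B_step:
  assumes Z[measurable]: "Z \<in> borel_measurable OM"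
    and Zi: "\<And>x k y. k \<in> range g \<union> range v0 \<union> range v1 \<Longrightarrow> Z (x(k := y)) = Z x"
    and w[measurable]: "w \<in> borel_measurable borel"
  shows "(\<integral>\<^sup>+\<omega>. Z (Xv \<omega>) * (if Hn r g v0 v1 (Xv \<omega>) n then 1 else 0) * w (psum g (Xv \<omega>) n) \<partial>M)
     = (\<integral>\<^sup>+\<omega>. Z (Xv \<omega>) \<partial>M) * (Top mu lam r ^^ n) w 0"
  using w
proof (induction n arbitrary: w)
  case 0
  then show ?case by (simp add: Hn_def psum_def nn_integral_multc)
next
  case (Suc n)
  note wm[measurable] = Suc.prems
  define s where "s = (\<lambda>x. psum g x n + x (g n))"
  have s_meas[measurable]: "s \<in> borel_measurable OM" unfolding s_def by measurable
  have psS: "psum g x (Suc n) = s x" for x by (simp add: psum_def s_def)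
  have HS: "Hn r g v0 v1 x (Suc n) = (Hn r g v0 v1 x n \<and> good r (s x) (x (v0 n)) (x (v1 n)))" for x
    by (auto simp: Hn_def less_Suc_eq psS)
  define F1 where "F1 = (\<lambda>x. Z x * (if Hn r g v0 v1 x n \<and> good r (s x) (x (v0 n)) (x (v1 n)) then 1 else 0) * w (s x))"
  define F2 where "F2 = (\<lambda>x. Z x * (if Hn r g v0 v1 x n then 1 else 0) * w (s x) *
      ennreal (if (s x)\<^sup>2 \<le> r\<^sup>2 then (if cd r (s x) < x (v0 n) then exp (- cd r (s x) * lam) else 0) else 1))"
  define F3 where "F3 = (\<lambda>x. Z x * (if Hn r g v0 v1 x n then 1 else 0) *
      (ennreal (phi lam r (psum g x n + x (g n))) * w (psum g x n + x (g n))))"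
  have F1m[measurable]: "F1 \<in> borel_measurable OM" unfolding F1_def by measurable
  have F2m[measurable]: "F2 \<in> borel_measurable OM" unfolding F2_def by measurable
  have F3m[measurable]: "F3 \<in> borel_measurable OM" unfolding F3_def by measurable
  have nv1: "v1 n \<notin> g ` {..<n}" "v1 n \<notin> v0 ` {..<n}" "v1 n \<notin> v1 ` {..<n}"
    using disj disj' inj by (auto dest: injD)
  have nv0: "v0 n \<notin> g ` {..<n}" "v0 n \<notin> v0 ` {..<n}" "v0 n \<notin> v1 ` {..<n}"
    using disj disj' inj by (auto dest: injD)
  have ng: "g n \<notin> g ` {..<n}" "g n \<notin> v0 ` {..<n}" "g n \<notin> v1 ` {..<n}"
    using disj disj' inj by (auto dest: injD)
  have inner1: "(\<integral>\<^sup>+y. F1 (x(v1 n := y)) \<partial>distr M borel (X (v1 n))) = F2 x" for x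
  proof -
    have upd: "Z (x(v1 n := y)) = Z x" "Hn r g v0 v1 (x(v1 n := y)) n = Hn r g v0 v1 x n"
      "s (x(v1 n := y)) = s x" "(x(v1 n := y)) (v0 n) = x (v0 n)" for y
      using nv1 disj[of n n] disj[of _ n]
      by (auto simp: Zi Hn_upd s_def psum_upd)
    have "(\<integral>\<^sup>+y. F1 (x(v1 n := y)) \<partial>distr M borel (X (v1 n))) =
       (\<integral>\<^sup>+y. Z x * (if Hn r g v0 v1 x n \<and> good r (s x) (x (v0 n)) y then 1 else 0) * w (s x) \<partial>distr M borel (X (v1 n)))"
      using disj(3)[of n n] by (simp add: F1_def upd)
    also have "\<dots> = F2 x"
    proof (cases "Hn r g v0 v1 x n \<and> (s x)\<^sup>2 \<le> r\<^sup>2 \<and> cd r (s x) < x (v0 n)")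
      case True
      then have "(\<integral>\<^sup>+y. Z x * (if Hn r g v0 v1 x n \<and> good r (s x) (x (v0 n)) y then 1 else 0) * w (s x) \<partial>distr M borel (X (v1 n)))
         = (\<integral>\<^sup>+y. (if cd r (s x) < y then Z x * w (s x) else 0) \<partial>distr M borel (X (v1 n)))"
        by (intro nn_integral_cong) (auto simp: good_def)
      also have "\<dots> = Z x * w (s x) * ennreal (exp (- cd r (s x) * lam))"
        using True by (intro mark_step[OF Dv1 lam] cd_nonneg) auto
      finally show ?thesis using True by (simp add: F2_def)
    next
      case False
      show ?thesis
      proof (cases "Hn r g v0 v1 x n \<and> \<not> (s x)\<^sup>2 \<le> r\<^sup>2")
        case True
        then show ?thesis by (simp add: F2_def good_def const_step)
      next
        case False2: False
        with False show ?thesis by (auto simp: F2_def good_def)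
      qed
    qed
    finally show ?thesis .
  qed
  have inner2: "(\<integral>\<^sup>+y. F2 (x(v0 n := y)) \<partial>distr M borel (X (v0 n))) = F3 x" for x
  proof -
    have upd: "Z (x(v0 n := y)) = Z x" "Hn r g v0 v1 (x(v0 n := y)) n = Hn r g v0 v1 x n"
      "s (x(v0 n := y)) = s x" for y
      using nv0 disj[of n n] disj[of _ n]
      by (auto simp: Zi Hn_upd s_def psum_upd)
    have "(\<integral>\<^sup>+y. F2 (x(v0 n := y)) \<partial>distr M borel (X (v0 n))) =
       (\<integral>\<^sup>+y. Z x * (if Hn r g v0 v1 x n then 1 else 0) * w (s x) *
      ennreal (if (s x)\<^sup>2 \<le> r\<^sup>2 then (if cd r (s x) < y then exp (- cd r (s x) * lam) else 0) else 1) \<partial>distr M borel (X (v0 n)))"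
      by (intro nn_integral_cong) (simp add: F2_def upd)
    also have "\<dots> = F3 x"
    proof (cases "(s x)\<^sup>2 \<le> r\<^sup>2")
      case True
      then have "(\<integral>\<^sup>+y. Z x * (if Hn r g v0 v1 x n then 1 else 0) * w (s x) *
      ennreal (if (s x)\<^sup>2 \<le> r\<^sup>2 then (if cd r (s x) < y then exp (- cd r (s x) * lam) else 0) else 1) \<partial>distr M borel (X (v0 n)))
        = (\<integral>\<^sup>+y. (if cd r (s x) < y then Z x * (if Hn r g v0 v1 x n then 1 else 0) * w (s x) * ennreal (exp (- cd r (s x) * lam)) else 0) \<partial>distr M borel (X (v0 n)))"
        by (intro nn_integral_cong) auto
      also have "\<dots> = Z x * (if Hn r g v0 v1 x n then 1 else 0) * w (s x) * ennreal (exp (- cd r (s x) * lam)) * ennreal (exp (- cd r (s x) * lam))"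
        using True by (intro mark_step[OF Dv0 lam] cd_nonneg) auto
      finally show ?thesis using True
        by (simp add: F3_def phi_def s_def ennreal_mult' mult_ac)
    next
      case False
      then show ?thesis by (simp add: F3_def phi_def s_def const_step)
    qed
    finally show ?thesis .
  qed
  have inner3: "(\<integral>\<^sup>+y. F3 (x(g n := y)) \<partial>distr M borel (X (g n))) =
      Z x * (if Hn r g v0 v1 x n then 1 else 0) * Top mu lam r w (psum g x n)" for x
  proof -
    have upd: "Z (x(g n := y)) = Z x" "Hn r g v0 v1 (x(g n := y)) n = Hn r g v0 v1 x n"
      "psum g (x(g n := y)) n = psum g x n" for y
      using ng by (auto simp: Zi Hn_upd psum_upd)
    have "(\<integral>\<^sup>+y. F3 (x(g n := y)) \<partial>distr M borel (X (g n))) =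
      (\<integral>\<^sup>+y. Z x * (if Hn r g v0 v1 x n then 1 else 0) * (ennreal (phi lam r (psum g x n + y)) * w (psum g x n + y))
          \<partial>density lborel (exponential_density mu))"
      by (simp add: F3_def upd distr_exp[OF Dg])
    also have "\<dots> = Z x * (if Hn r g v0 v1 x n then 1 else 0) * Top mu lam r w (psum g x n)"
      unfolding Top_def by (rule nn_integral_cmult) measurable
    finally show ?thesis .
  qed
  have "(\<integral>\<^sup>+\<omega>. Z (Xv \<omega>) * (if Hn r g v0 v1 (Xv \<omega>) (Suc n) then 1 else 0) * w (psum g (Xv \<omega>) (Suc n)) \<partial>M)
      = (\<integral>\<^sup>+\<omega>. F1 (Xv \<omega>) \<partial>M)"
    by (simp add: F1_def HS psS)
  also have "\<dots> = (\<integral>\<^sup>+\<omega>. F2 (Xv \<omega>) \<partial>M)"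
    by (simp add: peel[OF F1m, of "v1 n"] inner1)
  also have "\<dots> = (\<integral>\<^sup>+\<omega>. F3 (Xv \<omega>) \<partial>M)"
    by (simp add: peel[OF F2m, of "v0 n"] inner2)
  also have "\<dots> = (\<integral>\<^sup>+\<omega>. Z (Xv \<omega>) * (if Hn r g v0 v1 (Xv \<omega>) n then 1 else 0) * Top mu lam r w (psum g (Xv \<omega>) n) \<partial>M)"
    by (simp add: peel[OF F3m, of "g n"] inner3)
  also have "\<dots> = (\<integral>\<^sup>+\<omega>. Z (Xv \<omega>) \<partial>M) * (Top mu lam r ^^ n) (Top mu lam r w) 0"
    by (rule Suc.IH) (rule Top_meas[OF wm mu])
  also have "\<dots> = (\<integral>\<^sup>+\<omega>. Z (Xv \<omega>) \<partial>M) * (Top mu lam r ^^ Suc n) w 0"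
    by (simp add: funpow_Suc_right del: funpow.simps)
  finally show ?case .
qed

end

definition hh :: "real \<Rightarrow> real \<Rightarrow> real \<Rightarrow> real" where
  "hh lam r u = exp (- 2 * lam * sqrt (r\<^sup>2 - u\<^sup>2))"
definition II :: "real \<Rightarrow> real \<Rightarrow> real \<Rightarrow> real" where
  "II lam r s = integral {s..r} (\<lambda>u. 1 - hh lam r u)"

lemma hh_cont[continuous_intros]: "continuous_on A (hh lam r)"
  unfolding hh_def by (intro continuous_intros)

lemma II_cont: "continuous_on {0..r} (II lam r)"
  unfolding II_def
  by (intro indefinite_integral_continuous_1' integrable_continuous_interval continuous_intros)

lemma II_deriv: "0 < t \<Longrightarrow> t < r \<Longrightarrow> (II lam r has_real_derivative - (1 - hh lam r t)) (at t)"
proof -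
  assume t: "0 < t" "t < r"
  have "(II lam r has_real_derivative - (1 - hh lam r t)) (at t within {0..r})"
    unfolding II_def
    by (rule integral_has_real_derivative') (use t in \<open>auto intro!: continuous_intros\<close>)
  then show ?thesis using t by (simp add: at_within_Icc_at)
qed

lemma II_nonneg:
  assumes "0 \<le> lam" "0 \<le> b" "b \<le> r" shows "0 \<le> II lam r b"
  unfolding II_def
proof (rule integral_nonneg)
  show "(\<lambda>u. 1 - hh lam r u) integrable_on {b..r}"
    by (intro integrable_continuous_interval continuous_intros)
  fix u assume u: "u \<in> {b..r}"
  then have "u\<^sup>2 \<le> r\<^sup>2" using assms by (intro power_mono) auto
  then show "0 \<le> 1 - hh lam r u" using assms by (simp add: hh_def)
qed

lemma II_r[simp]: "II lam r r = 0"
  by (simp add: II_def)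

lemma fixed_point_integral:
  assumes mu: "0 < mu" and a: "0 \<le> a" "a \<le> r"
  shows "((\<lambda>y. mu * exp (- y * mu) * hh lam r (a + y) * exp (- mu * II lam r (a + y))) has_integral
           (exp (- mu * II lam r a) - exp (- (r - a) * mu))) {0..r - a}"
proof -
  define f where "f = (\<lambda>y. - (exp (- y * mu) * exp (- mu * II lam r (a + y))))"
  have "((\<lambda>y. mu * exp (- y * mu) * hh lam r (a + y) * exp (- mu * II lam r (a + y))) has_integral (f (r - a) - f 0)) {0..r - a}"
  proof (rule fundamental_theorem_of_calculus_interior)
    show "0 \<le> r - a" using a by simp
    have "continuous_on {0..r - a} (\<lambda>y. II lam r (a + y))"
      by (rule continuous_on_compose2[OF II_cont]) (use a in \<open>auto intro!: continuous_intros\<close>)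
    then show "continuous_on {0..r - a} f"
      unfolding f_def by (intro continuous_intros)
  next
    fix y assume y: "y \<in> {0<..<r - a}"
    have dI: "((\<lambda>y. II lam r (a + y)) has_real_derivative - (1 - hh lam r (a + y)) * 1) (at y)"
      by (rule DERIV_chain2[OF II_deriv]) (use y a in \<open>auto intro!: derivative_eq_intros\<close>)
    have "(f has_real_derivative mu * exp (- y * mu) * hh lam r (a + y) * exp (- mu * II lam r (a + y))) (at y)"
      unfolding f_def
      by (rule derivative_eq_intros dI refl | simp)+ (simp add: algebra_simps)
    then show "(f has_vector_derivative mu * exp (- y * mu) * hh lam r (a + y) * exp (- mu * II lam r (a + y))) (at y)"
      by (simp add: has_real_derivative_iff_has_vector_derivative)
  qed
  moreover have "f (r - a) - f 0 = exp (- mu * II lam r a) - exp (- (r - a) * mu)"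
    by (simp add: f_def algebra_simps)
  ultimately show ?thesis by metis
qed

context street_line begin

abbreviation "DD \<equiv> density lborel (\<lambda>y. ennreal (exponential_density mu y))"
abbreviation "T \<equiv> Top mu lam r"

definition Fr :: "real \<Rightarrow> real" where
  "Fr a = (if a \<in> {0..r} then exp (- mu * II lam r a) else 1)"
definition Fz :: "real \<Rightarrow> ennreal" where
  "Fz a = ennreal (Fr a)"
definition ind :: "real \<Rightarrow> ennreal" where
  "ind a = (if a \<le> r then 1 else 0)"

lemma Fr_meas[measurable]: "Fr \<in> borel_measurable borel"
  unfolding Fr_def
  by (rule borel_measurable_continuous_on_if) (auto intro!: continuous_intros continuous_on_compose2[OF II_cont])

lemma Fz_meas[measurable]: "Fz \<in> borel_measurable borel"
  unfolding Fz_def by measurable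

lemma ind_meas[measurable]: "ind \<in> borel_measurable borel"
  unfolding ind_def by measurable

lemma dens_meas[measurable]: "(\<lambda>y. ennreal (exponential_density mu y)) \<in> borel_measurable borel"
  by (simp add: exponential_density_def) 

lemma Top_lborel:
  assumes [measurable]: "w \<in> borel_measurable borel"
  shows "T w a = (\<integral>\<^sup>+y. ennreal (exponential_density mu y) * (ennreal (phi lam r (a + y)) * w (a + y)) \<partial>lborel)"
  unfolding Top_def by (rule nn_integral_density) measurable

lemma Top_mono_ge:
  assumes [measurable]: "w \<in> borel_measurable borel" "w' \<in> borel_measurable borel"
    and le: "\<And>b. a \<le> b \<Longrightarrow> w b \<le> w' b"
  shows "T w a \<le> T w' a"
  unfolding Top_lborel[OF assms(1)] Top_lborel[OF assms(2)]
  by (intro nn_integral_mono) (auto simp: exponential_density_def intro!: mult_left_mono le)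

lemma Top_cong_ge:
  assumes [measurable]: "w \<in> borel_measurable borel" "w' \<in> borel_measurable borel"
    and eq: "\<And>b. a \<le> b \<Longrightarrow> w b = w' b"
  shows "T w a = T w' a"
  using Top_mono_ge[OF assms(1,2)] Top_mono_ge[OF assms(2,1)] eq by (metis order.antisym order.refl)

lemma Top_add:
  assumes [measurable]: "u \<in> borel_measurable borel" "v \<in> borel_measurable borel"
  shows "T (\<lambda>b. u b + v b) a = T u a + T v a"
  unfolding Top_def by (simp add: distrib_left nn_integral_add)

lemma Top_cmult:
  assumes [measurable]: "u \<in> borel_measurable borel"
  shows "T (\<lambda>b. c * u b) a = c * T u a"
  unfolding Top_def by (subst nn_integral_cmult[symmetric]) (simp_all add: mult_ac)

lemma Tn_meas[measurable]:
  assumes [measurable]: "w \<in> borel_measurable borel"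
  shows "(T ^^ n) w \<in> borel_measurable borel"
  by (induction n) (simp_all add: Top_meas[OF _ mu])

end

context street_line begin

lemma DD_eq: "distr M borel (X (g 0)) = DD"
  using distr_exp[OF Dg[of 0]] .

lemma DD_le: assumes "0 \<le> c" shows "emeasure DD {..c} = ennreal (1 - exp (- c * mu))"
proof -
  have "emeasure DD {..c} = emeasure M {x \<in> space M. X (g 0) x \<le> c}"
    unfolding DD_eq[symmetric]
    by (subst emeasure_distr) (auto intro!: arg_cong[where f="emeasure M"])
  also have "\<dots> = ennreal (prob {x \<in> space M. X (g 0) x \<le> c})"
    by (simp add: emeasure_eq_measure)
  finally show ?thesis using exponential_distributedD_le[OF Dg[of 0] assms mu] by simp
qed

lemma DD_gt: assumes "0 \<le> c" shows "emeasure DD {c<..} = ennreal (exp (- c * mu))"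
  using tail_exp[OF Dg[of 0] mu assms] unfolding DD_eq .

lemma DD_UNIV: "emeasure DD UNIV = 1"
  using distr_UNIV[of "g 0"] unfolding DD_eq .

lemma phi_nonneg: "0 \<le> phi lam r s" by (simp add: phi_def)
lemma phi_le1: "phi lam r s \<le> 1"
proof -
  have "s\<^sup>2 \<le> r\<^sup>2 \<Longrightarrow> exp (- cd r s * lam) \<le> 1"
    using cd_nonneg[of s] lam by (simp add: mult_nonneg_nonneg)
  then show ?thesis unfolding phi_def
    by (auto intro!: mult_le_one)
qed

lemma phi_hh: "0 \<le> s \<Longrightarrow> s \<le> r \<Longrightarrow> phi lam r s = hh lam r s"
proof -
  assume s: "0 \<le> s" "s \<le> r"
  then have "s\<^sup>2 \<le> r\<^sup>2" by (simp add: power_mono)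
  then show ?thesis
    by (simp add: phi_def hh_def cd_def exp_add[symmetric] algebra_simps)
qed

lemma phi_out: "r < s \<Longrightarrow> phi lam r s = 1"
proof -
  assume s: "r < s"
  then have "r\<^sup>2 < s\<^sup>2" using r by (simp add: power_strict_mono)
  then show ?thesis by (simp add: phi_def)
qed

lemma Fz_fixed:
  assumes a: "0 \<le> a"
  shows "T Fz a = Fz a"
proof (cases "r < a")
  case True
  have "T Fz a = (\<integral>\<^sup>+y. ennreal (exponential_density mu y) \<partial>lborel)"
    unfolding Top_lborel[OF Fz_meas]
    using True a by (intro nn_integral_cong) (auto simp: exponential_density_def phi_out Fz_def Fr_def)
  also have "\<dots> = emeasure DD UNIV"
    by (subst emeasure_density) auto
  also have "\<dots> = Fz a" using True by (simp add: DD_UNIV Fz_def Fr_def)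
  finally show ?thesis .
next
  case False
  define k1 where "k1 = (\<lambda>y. mu * exp (- y * mu) * hh lam r (a + y) * exp (- mu * II lam r (a + y)))"
  have HI: "(k1 has_integral (exp (- mu * II lam r a) - exp (- (r - a) * mu))) {0..r - a}"
    unfolding k1_def using fixed_point_integral[OF mu a] False by simp
  have k1_nn: "0 \<le> k1 y" for y using mu by (simp add: k1_def hh_def)
  have k1_meas[measurable]: "(\<lambda>y. indicator {0..r - a} y * k1 y) \<in> borel_measurable borel"
  proof -
    have "continuous_on {0..r - a} k1"
      unfolding k1_def using a False
      by (intro continuous_intros continuous_on_compose2[OF II_cont] continuous_on_compose2[OF hh_cont]) auto
    from borel_measurable_continuous_on_indicator[OF _ this] show ?thesis by simp
  qed
  have "T Fz a = (\<integral>\<^sup>+y. ennreal (indicator {0..r - a} y * k1 y) + ennreal (exponential_density mu y) * indicator {r - a<..} y \<partial>lborel)"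
    unfolding Top_lborel[OF Fz_meas]
  proof (intro nn_integral_cong)
    fix y :: real
    consider "y < 0" | "0 \<le> y" "y \<le> r - a" | "r - a < y" by linarith
    then show "ennreal (exponential_density mu y) * (ennreal (phi lam r (a + y)) * Fz (a + y)) =
        ennreal (indicator {0..r - a} y * k1 y) + ennreal (exponential_density mu y) * indicator {r - a<..} y"
    proof cases
      case 1 then show ?thesis using False by (auto simp: exponential_density_def)
    next
      case 2
      then show ?thesis using a mu
        by (simp add: exponential_density_def phi_hh Fz_def Fr_def k1_def ennreal_mult'' hh_def mult_ac)
    next
      case 3
      then show ?thesis using a mu False
        by (simp add: exponential_density_def phi_out Fz_def Fr_def)
    qed
  qed
  also have "\<dots> = (\<integral>\<^sup>+y. ennreal (indicator {0..r - a} y * k1 y) \<partial>lborel) + (\<integral>\<^sup>+y. ennreal (exponential_density mu y) * indicator {r - a<..} y \<partial>lborel)"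
    by (rule nn_integral_add) auto
  also have "(\<integral>\<^sup>+y. ennreal (indicator {0..r - a} y * k1 y) \<partial>lborel) = ennreal (exp (- mu * II lam r a) - exp (- (r - a) * mu))"
    by (rule nn_integral_has_integral_lebesgue[OF _ HI]) (rule k1_nn)
  also have "(\<integral>\<^sup>+y. ennreal (exponential_density mu y) * indicator {r - a<..} y \<partial>lborel) = ennreal (exp (- (r - a) * mu))"
  proof -
    have "emeasure DD {r - a<..} = (\<integral>\<^sup>+y. ennreal (exponential_density mu y) * indicator {r - a<..} y \<partial>lborel)"
      by (rule emeasure_density) auto
    then show ?thesis using DD_gt[of "r - a"] False by simp
  qed
  also have "ennreal (exp (- mu * II lam r a) - exp (- (r - a) * mu)) + ennreal (exp (- (r - a) * mu)) = ennreal (exp (- mu * II lam r a))"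
  proof -
    have "0 \<le> exp (- mu * II lam r a) - exp (- (r - a) * mu)"
      using has_integral_nonneg[OF HI] k1_nn by auto
    then show ?thesis by (subst ennreal_plus[symmetric]) auto
  qed
  also have "\<dots> = Fz a" using False a by (simp add: Fz_def Fr_def)
  finally show ?thesis .
qed

end

context street_line begin

lemma Tn_Fz: "0 \<le> a \<Longrightarrow> (T ^^ n) Fz a = Fz a"
proof (induction n arbitrary: a)
  case 0 then show ?case by simp
next
  case (Suc n)
  have "(T ^^ Suc n) Fz a = T ((T ^^ n) Fz) a" by simp
  also have "\<dots> = T Fz a"
    by (rule Top_cong_ge) (use Suc in auto)
  also have "\<dots> = Fz a" by (rule Fz_fixed) fact
  finally show ?case .
qed

lemma Tn_mono:
  assumes [measurable]: "w \<in> borel_measurable borel" "w' \<in> borel_measurable borel"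
    and le: "\<And>b. w b \<le> w' b"
  shows "(T ^^ n) w a \<le> (T ^^ n) w' a"
proof (induction n arbitrary: a)
  case 0 then show ?case using le by simp
next
  case (Suc n)
  have "(T ^^ Suc n) w a = T ((T ^^ n) w) a" by simp
  also have "\<dots> \<le> T ((T ^^ n) w') a"
    by (rule Top_mono_ge) (use Suc in auto)
  finally show ?case by simp
qed

lemma Tn_add:
  assumes [measurable]: "u \<in> borel_measurable borel" "v \<in> borel_measurable borel"
  shows "(T ^^ n) (\<lambda>b. u b + v b) a = (T ^^ n) u a + (T ^^ n) v a"
proof (induction n arbitrary: a)
  case 0 then show ?case by simp
next
  case (Suc n)
  have "(T ^^ n) (\<lambda>b. u b + v b) = (\<lambda>b. (T ^^ n) u b + (T ^^ n) v b)"
    using Suc by auto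
  then have "(T ^^ Suc n) (\<lambda>b. u b + v b) a = T (\<lambda>b. (T ^^ n) u b + (T ^^ n) v b) a"
    by simp
  also have "\<dots> = (T ^^ Suc n) u a + (T ^^ Suc n) v a"
    by (simp add: Top_add)
  finally show ?case .
qed

definition q :: ennreal where "q = ennreal (1 - exp (- r * mu))"

lemma T_ind:
  assumes a: "0 \<le> a"
  shows "T ind a \<le> q * ind a"
proof (cases "r < a")
  case True
  have pw: "ennreal (exponential_density mu y) * (ennreal (phi lam r (a + y)) * ind (a + y)) = 0" for y
    using True a by (cases "y < 0") (auto simp: exponential_density_def ind_def)
  have "T ind a = 0"
    unfolding Top_lborel[OF ind_meas] pw by simp
  then show ?thesis by simp
next
  case False
  have "T ind a \<le> (\<integral>\<^sup>+y. ennreal (exponential_density mu y) * indicator {..r - a} y \<partial>lborel)"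
    unfolding Top_lborel[OF ind_meas]
    by (intro nn_integral_mono)
       (auto simp: ind_def indicator_def phi_le1 intro!: mult_left_le)
  also have "\<dots> = emeasure DD {..r - a}"
    by (rule emeasure_density[symmetric]) auto
  also have "\<dots> = ennreal (1 - exp (- (r - a) * mu))"
    using False by (intro DD_le) simp
  also have "\<dots> \<le> q"
  proof -
    have "0 \<le> a * mu" using a mu by simp
    then show ?thesis unfolding q_def by (intro ennreal_leI) (simp add: algebra_simps)
  qed
  finally show ?thesis using False by (simp add: ind_def)
qed

lemma Tn_ind: "0 \<le> a \<Longrightarrow> (T ^^ n) ind a \<le> q ^ n * ind a"
proof (induction n arbitrary: a)
  case 0 then show ?case by simp
next
  case (Suc n)
  have "(T ^^ Suc n) ind a = T ((T ^^ n) ind) a" by simp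
  also have "\<dots> \<le> T (\<lambda>b. q ^ n * ind b) a"
    by (rule Top_mono_ge) (use Suc in auto)
  also have "\<dots> = q ^ n * T ind a" by (simp add: Top_cmult)
  also have "\<dots> \<le> q ^ n * (q * ind a)"
    by (intro mult_left_mono T_ind Suc.prems) simp
  finally show ?case by (simp add: mult_ac)
qed

lemma Fz0: "Fz 0 = ennreal (exp (- mu * II lam r 0))"
  using r by (simp add: Fz_def Fr_def)

lemma Tn_bounds:
  "Fz 0 \<le> (T ^^ n) (\<lambda>_. 1) 0 \<and> (T ^^ n) (\<lambda>_. 1) 0 \<le> Fz 0 + q ^ n"
proof
  have "Fz 0 = (T ^^ n) Fz 0" by (simp add: Tn_Fz)
  also have "\<dots> \<le> (T ^^ n) (\<lambda>_. 1) 0"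
    by (rule Tn_mono, measurable, measurable) (use II_nonneg[of lam] lam mu in \<open>auto simp: Fz_def Fr_def\<close>)
  finally show "Fz 0 \<le> (T ^^ n) (\<lambda>_. 1) 0" .
  have "(T ^^ n) (\<lambda>_. 1) 0 \<le> (T ^^ n) (\<lambda>b. Fz b + ind b) 0"
    by (rule Tn_mono, measurable, measurable) (auto simp: Fz_def Fr_def ind_def)
  also have "\<dots> = (T ^^ n) Fz 0 + (T ^^ n) ind 0" by (rule Tn_add) auto
  also have "\<dots> \<le> Fz 0 + q ^ n"
    using Tn_ind[of 0 n] r by (intro add_mono) (auto simp: Tn_Fz ind_def)
  finally show "(T ^^ n) (\<lambda>_. 1) 0 \<le> Fz 0 + q ^ n" .
qed

end

definition Aset :: "real \<Rightarrow> nat \<Rightarrow> (rv_index \<Rightarrow> real) \<Rightarrow> bool" where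
  "Aset r p x = (\<forall>j<p. r < x (TypVehGap j 0) \<and> r < x (TypVehGap j (-1)))"

lemma Aset_meas[measurable]: "Measurable.pred (PiM UNIV (\<lambda>_. borel)) (Aset r p)"
  unfolding Aset_def by measurable

context street begin

lemma Xv_apply: "Xv \<omega> k = X k \<omega>" by (simp add: Xv_def)

lemma A_step:
  assumes DW: "\<And>j l. distributed M lborel (X (TypVehGap j l)) (exponential_density lam)"
    and lam: "0 < lam" and r: "0 \<le> r"
    and Z[measurable]: "Z \<in> borel_measurable OM"
    and Zi: "\<And>x j l y. Z (x(TypVehGap j l := y)) = Z x"
  shows "(\<integral>\<^sup>+\<omega>. Z (Xv \<omega>) * (if Aset r p (Xv \<omega>) then 1 else 0) \<partial>M)
     = (\<integral>\<^sup>+\<omega>. Z (Xv \<omega>) \<partial>M) * ennreal (exp (- r * lam)) ^ (2 * p)"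
proof (induction p)
  case 0 then show ?case by (simp add: Aset_def)
next
  case (Suc p)
  have AS: "Aset r (Suc p) x = (Aset r p x \<and> r < x (TypVehGap p 0) \<and> r < x (TypVehGap p (-1)))" for x
    by (auto simp: Aset_def less_Suc_eq)
  have Au: "Aset r p (x(TypVehGap j l := y)) = Aset r p x" if "p \<le> j" for x j l y
    using that by (auto simp: Aset_def)
  define Z1 where "Z1 = (\<lambda>x. Z x * (if Aset r p x then 1 else 0) * (if r < x (TypVehGap p 0) then 1 else (0::ennreal)))"
  define Z2 where "Z2 = (\<lambda>x. Z x * (if Aset r p x then 1 else (0::ennreal)))"
  have [measurable]: "Z1 \<in> borel_measurable OM" "Z2 \<in> borel_measurable OM"
    unfolding Z1_def Z2_def by measurable
  have "(\<integral>\<^sup>+\<omega>. Z (Xv \<omega>) * (if Aset r (Suc p) (Xv \<omega>) then 1 else 0) \<partial>M)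
      = (\<integral>\<^sup>+\<omega>. Z1 (Xv \<omega>) * (if r < X (TypVehGap p (-1)) \<omega> then 1 else 0) \<partial>M)"
    by (intro nn_integral_cong) (simp add: AS Z1_def Xv_apply)
  also have "\<dots> = (\<integral>\<^sup>+\<omega>. Z1 (Xv \<omega>) \<partial>M) * ennreal (exp (- r * lam))"
  proof -
    have Z1i: "Z1 (x(TypVehGap p (-1) := y)) = Z1 x" for x y
      unfolding Z1_def by (subst Zi, subst Au) simp_all
    show ?thesis by (rule indep_step[OF DW lam r _ Z1i]) simp
  qed
  also have "(\<integral>\<^sup>+\<omega>. Z1 (Xv \<omega>) \<partial>M) = (\<integral>\<^sup>+\<omega>. Z2 (Xv \<omega>) * (if r < X (TypVehGap p 0) \<omega> then 1 else 0) \<partial>M)"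
    by (simp add: Z1_def Z2_def Xv_apply)
  also have "\<dots> = (\<integral>\<^sup>+\<omega>. Z2 (Xv \<omega>) \<partial>M) * ennreal (exp (- r * lam))"
  proof -
    have Z2i: "Z2 (x(TypVehGap p 0 := y)) = Z2 x" for x y
      unfolding Z2_def by (subst Zi, subst Au) simp_all
    show ?thesis by (rule indep_step[OF DW lam r _ Z2i]) simp
  qed
  also have "(\<integral>\<^sup>+\<omega>. Z2 (Xv \<omega>) \<partial>M) = (\<integral>\<^sup>+\<omega>. Z (Xv \<omega>) \<partial>M) * ennreal (exp (- r * lam)) ^ (2 * p)"
    using Suc by (simp add: Z2_def)
  finally show ?case by (simp add: mult_ac)
qed

end

lemma norm_line_point: "norm (line_point x ph t) = sqrt (x\<^sup>2 + t\<^sup>2)"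
proof -
  have "(x * cos ph - t * sin ph)\<^sup>2 + (x * sin ph + t * cos ph)\<^sup>2 = x\<^sup>2 * ((sin ph)\<^sup>2 + (cos ph)\<^sup>2) + t\<^sup>2 * ((sin ph)\<^sup>2 + (cos ph)\<^sup>2)"
    by algebra
  also have "\<dots> = x\<^sup>2 + t\<^sup>2" by simp
  finally show ?thesis by (simp add: line_point_def norm_Pair)
qed

lemma norm_le_iff: "0 \<le> r \<Longrightarrow> (norm (line_point x ph t) \<le> r) \<longleftrightarrow> x\<^sup>2 + t\<^sup>2 \<le> r\<^sup>2"
  unfolding norm_line_point by (simp add: real_sqrt_le_iff' sqrt_le_D real_le_lsqrt)

lemma ppp_near:
  assumes g: "\<And>i. 0 \<le> g i" and c: "0 \<le> c"
  shows "(\<exists>k. (ppp_point g k)\<^sup>2 \<le> c\<^sup>2) \<longleftrightarrow> (g 0 \<le> c \<or> g (-1) \<le> c)"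
proof
  assume "\<exists>k. (ppp_point g k)\<^sup>2 \<le> c\<^sup>2"
  then obtain k where k: "(ppp_point g k)\<^sup>2 \<le> c\<^sup>2" by blast
  show "g 0 \<le> c \<or> g (-1) \<le> c"
  proof (cases "0 \<le> k")
    case True
    have "g 0 \<le> (\<Sum>j\<in>{0..k}. g j)" using True g by (intro member_le_sum) auto
    moreover have "(\<Sum>j\<in>{0..k}. g j)\<^sup>2 \<le> c\<^sup>2" using k True by (simp add: ppp_point_def)
    moreover have "0 \<le> (\<Sum>j\<in>{0..k}. g j)" using g by (simp add: sum_nonneg)
    ultimately have "g 0 \<le> c" using c by (meson order.trans power2_le_imp_le)
    then show ?thesis by simp
  next
    case False
    have "g (-1) \<le> (\<Sum>j\<in>{k..-1}. g j)" using False g by (intro member_le_sum) auto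
    moreover have "(\<Sum>j\<in>{k..-1}. g j)\<^sup>2 \<le> c\<^sup>2" using k False by (simp add: ppp_point_def)
    moreover have "0 \<le> (\<Sum>j\<in>{k..-1}. g j)" using g by (simp add: sum_nonneg)
    ultimately have "g (-1) \<le> c" using c by (meson order.trans power2_le_imp_le)
    then show ?thesis by simp
  qed
next
  assume "g 0 \<le> c \<or> g (-1) \<le> c"
  then show "\<exists>k. (ppp_point g k)\<^sup>2 \<le> c\<^sup>2"
  proof
    assume "g 0 \<le> c"
    then have "(ppp_point g 0)\<^sup>2 \<le> c\<^sup>2" using g[of 0] by (simp add: ppp_point_def power_mono)
    then show ?thesis by blast
  next
    assume "g (-1) \<le> c"
    then have "(ppp_point g (-1))\<^sup>2 \<le> c\<^sup>2" using g[of "-1"] by (simp add: ppp_point_def power_mono)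
    then show ?thesis by blast
  qed
qed

lemma line_hit:
  assumes V: "\<And>i. 0 \<le> V i" and r: "0 \<le> r"
  shows "(\<exists>k. x\<^sup>2 + (ppp_point V k)\<^sup>2 \<le> r\<^sup>2) \<longleftrightarrow> \<not> good r x (V 0) (V (-1))"
proof (cases "x\<^sup>2 \<le> r\<^sup>2")
  case True
  define c where "c = cd r x"
  have c: "0 \<le> c" "c\<^sup>2 = r\<^sup>2 - x\<^sup>2" using True by (auto simp: c_def cd_def)
  have "(\<exists>k. x\<^sup>2 + (ppp_point V k)\<^sup>2 \<le> r\<^sup>2) \<longleftrightarrow> (\<exists>k. (ppp_point V k)\<^sup>2 \<le> c\<^sup>2)"
  proof -
    have "\<And>t. x\<^sup>2 + t\<^sup>2 \<le> r\<^sup>2 \<longleftrightarrow> t\<^sup>2 \<le> c\<^sup>2" using c(2) by linarith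
    then show ?thesis by simp
  qed
  also have "\<dots> \<longleftrightarrow> (V 0 \<le> c \<or> V (-1) \<le> c)" by (rule ppp_near[OF V c(1)])
  finally show ?thesis using True by (auto simp: good_def c_def)
next
  case False
  have "\<not> x\<^sup>2 + (ppp_point V k)\<^sup>2 \<le> r\<^sup>2" for k
    using False by (smt (verit) zero_le_power2)
  then show ?thesis using False by (simp add: good_def)
qed

lemma sum_pos_int: "(\<Sum>j\<in>{0..int n}. f j) = (\<Sum>j<Suc n. f (int j))"
proof (induction n)
  case 0 then show ?case by simp
next
  case (Suc n)
  have "{0..int (Suc n)} = insert (int (Suc n)) {0..int n}" by auto
  then show ?case using Suc by (simp add: ac_simps)
qed

lemma sum_neg_int: "(\<Sum>j\<in>{- int (Suc n)..-1}. f j) = (\<Sum>j<Suc n. f (-1 - int j))"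
proof (induction n)
  case 0 then show ?case by simp
next
  case (Suc n)
  have "{- int (Suc (Suc n))..-1} = insert (- int (Suc (Suc n))) {- int (Suc n)..-1}" by auto
  then show ?case using Suc by (simp add: algebra_simps)
qed

lemma good_neg: "good r (- s) a b = good r s a b"
  by (simp add: good_def cd_def)

lemma (in prob_space) exp_AE_nonneg:
  assumes D: "distributed M lborel Y (exponential_density l)"
  shows "AE \<omega> in M. 0 \<le> Y \<omega>"
proof -
  have eq: "distr M lborel Y = density lborel (exponential_density l)"
    using D by (simp add: distributed_def)
  have "AE x in density lborel (\<lambda>x. ennreal (exponential_density l x)). 0 \<le> x"
    by (subst AE_density) (auto simp: exponential_density_def)
  then have "AE x in distr M lborel Y. 0 \<le> x" by (simp only: eq)
  then show ?thesis using D by (intro AE_distrD[of Y M lborel]) (auto simp: distributed_def)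
qed

lemma ppp_meas[measurable]:
  assumes [measurable]: "\<And>l. f l \<in> borel_measurable M"
  shows "(\<lambda>\<omega>. ppp_point (\<lambda>l. f l \<omega>) k) \<in> borel_measurable M"
  unfolding ppp_point_def by (cases "0 \<le> k") simp_all

lemma int_cases_all: "(\<forall>i::int. P i) \<longleftrightarrow> (\<forall>n. P (int n)) \<and> (\<forall>n. P (- int (Suc n)))"
proof safe
  fix i :: int assume a: "\<forall>n. P (int n)" "\<forall>n. P (- int (Suc n))"
  show "P i"
  proof (cases "0 \<le> i")
    case True then show ?thesis using a(1)[rule_format, of "nat i"] by simp
  next
    case False
    then have "i = - int (Suc (nat (- i - 1)))" by simp
    then show ?thesis using a(2) by metis
  qed
qed auto

lemma Hn_all: "(\<forall>N. Hn r g v0 v1 x N) \<longleftrightarrow> (\<forall>n. good r (psum g x (Suc n)) (x (v0 n)) (x (v1 n)))"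
  unfolding Hn_def by (meson lessI)

theorem lemma6:
  fixes M :: "'a measure" and s :: street_model and m :: nat
    and mu lam r :: real and psi :: "nat \<Rightarrow> real"
    and G :: "int \<Rightarrow> 'a \<Rightarrow> real" and Phi :: "int \<Rightarrow> 'a \<Rightarrow> real"
    and V :: "int \<Rightarrow> int \<Rightarrow> 'a \<Rightarrow> real" and W :: "nat \<Rightarrow> int \<Rightarrow> 'a \<Rightarrow> real"
  assumes "prob_space M"
    and "mu > 0" and "lam > 0" and "r \<ge> 0"
    and "m = 2 \<or> m = 4"
    and "\<And>j. j < m div 2 \<Longrightarrow> psi j \<in> {0..<pi}"
    and "s = OG \<Longrightarrow> (\<And>j. j < m div 2 \<Longrightarrow> psi j \<in> {0, pi/2})"
    and "m = 4 \<Longrightarrow> psi 0 \<noteq> psi 1"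
    and "prob_space.indep_vars M (\<lambda>_. borel)
           (\<lambda>k. case k of LineGap i \<Rightarrow> G i | LineOrient i \<Rightarrow> Phi i
                        | VehGap i l \<Rightarrow> V i l | TypVehGap j l \<Rightarrow> W j l) UNIV"
    and "\<And>i. distributed M lborel (G i) (exponential_density mu)"
    and "\<And>i. distr M borel (Phi i) = orient_law s"
    and "\<And>i l. distributed M lborel (V i l) (exponential_density lam)"
    and "\<And>j l. distributed M lborel (W j l) (exponential_density lam)"
  shows "measure M {\<omega> \<in> space M. \<exists>v \<in> other_vehicles m psi (\<lambda>i. G i \<omega>) (\<lambda>i. Phi i \<omega>)
                           (\<lambda>i l. V i l \<omega>) (\<lambda>j l. W j l \<omega>). norm v \<le> r}
         = 1 - exp (- (real m * lam * r)
                    - 2 * mu * (LBINT u=0..r. 1 - exp (- 2 * lam * sqrt (r\<^sup>2 - u\<^sup>2))))"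
proof -
  note PS = assms(1) and mu = assms(2) and lam = assms(3) and r = assms(4) and m = assms(5)
    and IND = assms(9) and DG = assms(10) and DV = assms(12) and DW = assms(13)
  interpret prob_space M by (rule PS)
  define X where "X = (\<lambda>k. case k of LineGap i \<Rightarrow> G i | LineOrient i \<Rightarrow> Phi i
                        | VehGap i l \<Rightarrow> V i l | TypVehGap j l \<Rightarrow> W j l)"
  interpret S: street M X
    by unfold_locales (simp add: X_def IND)
  define gp where "gp = (\<lambda>j::nat. LineGap (int j))"
  define v0p where "v0p = (\<lambda>j::nat. VehGap (int j) 0)"
  define v1p where "v1p = (\<lambda>j::nat. VehGap (int j) (-1))"
  define gm where "gm = (\<lambda>j::nat. LineGap (-1 - int j))"
  define v0m where "v0m = (\<lambda>j::nat. VehGap (-1 - int j) 0)"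
  define v1m where "v1m = (\<lambda>j::nat. VehGap (-1 - int j) (-1))"
  interpret Lp: street_line M X gp v0p v1p mu lam r
    by unfold_locales (auto simp: X_def gp_def v0p_def v1p_def inj_def mu lam r DG DV)
  interpret Lm: street_line M X gm v0m v1m mu lam r
    by unfold_locales (auto simp: X_def gm_def v0m_def v1m_def inj_def mu lam r DG DV)
  define p where "p = m div 2"
  define NC where "NC = (\<lambda>N x. Aset r p x \<and> Hn r gm v0m v1m x N \<and> Hn r gp v0p v1p x N)"
  define tN where "tN = (\<lambda>N. (Top mu lam r ^^ N) (\<lambda>_. 1) 0)"
  have NC_meas[measurable]: "Measurable.pred S.OM (NC N)" for N
    unfolding NC_def by measurable
  have emNC: "emeasure M {\<omega> \<in> space M. NC N (S.Xv \<omega>)} = ennreal (exp (- r * lam)) ^ (2 * p) * tN N * tN N" for N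
  proof -
    define ZA where "ZA = (\<lambda>x. if Aset r p x then 1 else (0::ennreal))"
    define Z1 where "Z1 = (\<lambda>x. ZA x * (if Hn r gm v0m v1m x N then 1 else (0::ennreal)))"
    have [measurable]: "ZA \<in> borel_measurable S.OM" "Z1 \<in> borel_measurable S.OM"
      unfolding ZA_def Z1_def by measurable
    have ZAi: "ZA (x(k := y)) = ZA x" if "k \<in> range gp \<union> range v0p \<union> range v1p \<union> range gm \<union> range v0m \<union> range v1m" for x k y
      using that by (auto simp: ZA_def Aset_def gp_def v0p_def v1p_def gm_def v0m_def v1m_def)
    have ZAi': "ZA (x(k := y)) = ZA x" if "k \<in> range gm \<union> range v0m \<union> range v1m" for x k y
      using that by (intro ZAi) blast
    have Z1i: "Z1 (x(k := y)) = Z1 x" if "k \<in> range gp \<union> range v0p \<union> range v1p" for x k y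
    proof -
      have "k \<notin> gm ` {..<N}" "k \<notin> v0m ` {..<N}" "k \<notin> v1m ` {..<N}"
        using that by (auto simp: gp_def v0p_def v1p_def gm_def v0m_def v1m_def)
      then show ?thesis using that unfolding Z1_def by (simp add: ZAi Hn_upd)
    qed
    have "emeasure M {\<omega> \<in> space M. NC N (S.Xv \<omega>)} = (\<integral>\<^sup>+\<omega>. indicator {\<omega> \<in> space M. NC N (S.Xv \<omega>)} \<omega> \<partial>M)"
      by (rule nn_integral_indicator[symmetric]) measurable
    also have "\<dots> = (\<integral>\<^sup>+\<omega>. Z1 (S.Xv \<omega>) * (if Hn r gp v0p v1p (S.Xv \<omega>) N then 1 else 0) * (\<lambda>_. 1) (psum gp (S.Xv \<omega>) N) \<partial>M)"
      by (intro nn_integral_cong) (auto simp: NC_def Z1_def ZA_def indicator_def)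
    also have "\<dots> = (\<integral>\<^sup>+\<omega>. Z1 (S.Xv \<omega>) \<partial>M) * tN N"
      unfolding tN_def by (rule Lp.B_step[OF _ Z1i]) simp_all
    also have "(\<integral>\<^sup>+\<omega>. Z1 (S.Xv \<omega>) \<partial>M) = (\<integral>\<^sup>+\<omega>. ZA (S.Xv \<omega>) * (if Hn r gm v0m v1m (S.Xv \<omega>) N then 1 else 0) * (\<lambda>_. 1) (psum gm (S.Xv \<omega>) N) \<partial>M)"
      by (simp add: Z1_def)
    also have "\<dots> = (\<integral>\<^sup>+\<omega>. ZA (S.Xv \<omega>) \<partial>M) * tN N"
      unfolding tN_def by (rule Lm.B_step[OF _ ZAi']) simp_all
    also have "(\<integral>\<^sup>+\<omega>. ZA (S.Xv \<omega>) \<partial>M) = (\<integral>\<^sup>+\<omega>. (\<lambda>_. 1) (S.Xv \<omega>) * (if Aset r p (S.Xv \<omega>) then 1 else 0) \<partial>M)"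
      by (simp add: ZA_def)
    also have "\<dots> = (\<integral>\<^sup>+\<omega>. (\<lambda>_. 1) (S.Xv \<omega>) \<partial>M) * ennreal (exp (- r * lam)) ^ (2 * p)"
      by (rule S.A_step) (auto simp: X_def DW lam r)
    finally show ?thesis by (simp add: emeasure_space_1 mult_ac)
  qed
  define F0 where "F0 = exp (- mu * II lam r 0)"
  define qr where "qr = 1 - exp (- r * mu)"
  have qr: "0 \<le> qr" "qr < 1" using mu r by (auto simp: qr_def)
  define tr where "tr = (\<lambda>N. enn2real (tN N))"
  have tr: "tN N = ennreal (tr N) \<and> F0 \<le> tr N \<and> tr N \<le> F0 + qr ^ N" for N
  proof -
    have b: "ennreal F0 \<le> tN N" "tN N \<le> ennreal (F0 + qr ^ N)"
      using Lp.Tn_bounds[of N] qr unfolding tN_def Lp.Fz0 Lp.q_def F0_def qr_def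
      by (auto simp: ennreal_plus[symmetric] ennreal_power[symmetric])
    have "tN N < \<infinity>" using b(2) by (rule le_less_trans) simp
    then have fin: "tN N \<noteq> \<infinity>" by simp
    then have e: "tN N = ennreal (tr N)" by (simp add: tr_def ennreal_enn2real_if)
    have t0: "0 \<le> tr N" by (simp add: tr_def)
    have s0: "0 \<le> F0 + qr ^ N" using qr by (simp add: F0_def)
    have "F0 \<le> tr N" using ennreal_le_iff[OF t0, of F0] b(1) unfolding e by blast
    moreover have "tr N \<le> F0 + qr ^ N" using ennreal_le_iff[OF s0, of "tr N"] b(2) unfolding e by blast
    ultimately show ?thesis using e by blast
  qed
  have meNC: "measure M {\<omega> \<in> space M. NC N (S.Xv \<omega>)} = exp (- r * lam) ^ (2 * p) * tr N * tr N" for N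
  proof -
    have "emeasure M {\<omega> \<in> space M. NC N (S.Xv \<omega>)} = ennreal (exp (- r * lam) ^ (2 * p) * tr N * tr N)"
    proof -
      have t0: "0 \<le> tr N" using tr[of N] unfolding F0_def by (meson exp_ge_zero order_trans)
      have "ennreal (exp (- r * lam) ^ (2 * p) * tr N * tr N) = ennreal (exp (- r * lam) ^ (2 * p)) * ennreal (tr N) * ennreal (tr N)"
        using t0 by (simp add: ennreal_mult)
      then show ?thesis using tr[of N] unfolding emNC by (simp add: ennreal_power)
    qed
    moreover have "0 \<le> tr N" by (simp add: tr_def)
    ultimately show ?thesis unfolding measure_def by simp
  qed
  have trlim: "tr \<longlonglongrightarrow> F0"
  proof (rule tendsto_sandwich[of "\<lambda>_. F0" _ _ "\<lambda>N. F0 + qr ^ N"])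
    show "\<forall>\<^sub>F N in sequentially. F0 \<le> tr N" using tr by simp
    show "\<forall>\<^sub>F N in sequentially. tr N \<le> F0 + qr ^ N" using tr by simp
    show "(\<lambda>N. F0 + qr ^ N) \<longlonglongrightarrow> F0"
    proof -
      have "(\<lambda>N. qr ^ N) \<longlonglongrightarrow> 0" using LIMSEQ_power_zero[of qr] qr by simp
      then have "(\<lambda>N. F0 + qr ^ N) \<longlonglongrightarrow> F0 + 0" by (intro tendsto_add tendsto_const)
      then show ?thesis by simp
    qed
  qed simp
  define Cset where "Cset = {\<omega> \<in> space M. \<forall>N. NC N (S.Xv \<omega>)}"
  have Cset_meas: "Cset \<in> sets M" unfolding Cset_def by measurable
  have "(\<lambda>N. measure M {\<omega> \<in> space M. NC N (S.Xv \<omega>)}) \<longlonglongrightarrow> measure M (\<Inter>N. {\<omega> \<in> space M. NC N (S.Xv \<omega>)})"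
  proof (rule finite_Lim_measure_decseq)
    show "range (\<lambda>N. {\<omega> \<in> space M. NC N (S.Xv \<omega>)}) \<subseteq> sets M" by auto
    show "decseq (\<lambda>N. {\<omega> \<in> space M. NC N (S.Xv \<omega>)})"
      by (rule decseq_SucI) (auto simp: NC_def Hn_def less_Suc_eq)
  qed
  moreover have "(\<Inter>N. {\<omega> \<in> space M. NC N (S.Xv \<omega>)}) = Cset" unfolding Cset_def by blast
  moreover have "(\<lambda>N. measure M {\<omega> \<in> space M. NC N (S.Xv \<omega>)}) \<longlonglongrightarrow> exp (- r * lam) ^ (2 * p) * F0 * F0"
    unfolding meNC by (intro tendsto_intros trlim)
  ultimately have mC: "measure M Cset = exp (- r * lam) ^ (2 * p) * F0 * F0"
    using LIMSEQ_unique by simp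
  have [measurable]: "G i \<in> borel_measurable M" "V i l \<in> borel_measurable M" "W j l \<in> borel_measurable M" for i l j
    using S.X_meas[of "LineGap i"] S.X_meas[of "VehGap i l"] S.X_meas[of "TypVehGap j l"] by (simp_all add: X_def)
  define OVP where "OVP = (\<lambda>\<omega>. \<exists>v \<in> other_vehicles m psi (\<lambda>i. G i \<omega>) (\<lambda>i. Phi i \<omega>) (\<lambda>i l. V i l \<omega>) (\<lambda>j l. W j l \<omega>). norm v \<le> r)"
  have OV_iff: "OVP \<omega> \<longleftrightarrow> (\<exists>j<p. \<exists>k. (ppp_point (\<lambda>l. W j l \<omega>) k)\<^sup>2 \<le> r\<^sup>2) \<or>
      (\<exists>i k. (ppp_point (\<lambda>i. G i \<omega>) i)\<^sup>2 + (ppp_point (\<lambda>l. V i l \<omega>) k)\<^sup>2 \<le> r\<^sup>2)" for \<omega>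
  proof -
    have "OVP \<omega> \<longleftrightarrow> (\<exists>j k. j < p \<and> norm (line_point 0 (psi j) (ppp_point (\<lambda>l. W j l \<omega>) k)) \<le> r) \<or>
      (\<exists>i k. norm (line_point (ppp_point (\<lambda>i. G i \<omega>) i) (Phi i \<omega>) (ppp_point (\<lambda>l. V i l \<omega>) k)) \<le> r)"
      unfolding OVP_def other_vehicles_def p_def by blast
    then show ?thesis by (simp add: norm_le_iff[OF r])
  qed
  have E_meas: "{\<omega> \<in> space M. OVP \<omega>} \<in> sets M"
    unfolding OV_iff by measurable
  have AEnn: "AE \<omega> in M. (\<forall>i l. 0 \<le> V i l \<omega>) \<and> (\<forall>j l. 0 \<le> W j l \<omega>)"
    unfolding AE_conj_iff AE_all_countable by (auto intro: exp_AE_nonneg[OF DV] exp_AE_nonneg[OF DW])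
  have key: "OVP \<omega> \<longleftrightarrow> \<not> (\<forall>N. NC N (S.Xv \<omega>))"
    if nnV: "\<forall>i l. 0 \<le> V i l \<omega>" and nnW: "\<forall>j l. 0 \<le> W j l \<omega>" for \<omega>
  proof -
    have xvW: "S.Xv \<omega> (TypVehGap j l) = W j l \<omega>" for j l by (subst S.Xv_apply) (simp add: X_def)
    have xvG: "S.Xv \<omega> (LineGap i) = G i \<omega>" for i by (subst S.Xv_apply) (simp add: X_def)
    have xvV: "S.Xv \<omega> (VehGap i l) = V i l \<omega>" for i l by (subst S.Xv_apply) (simp add: X_def)
    have A: "(\<exists>j<p. \<exists>k. (ppp_point (\<lambda>l. W j l \<omega>) k)\<^sup>2 \<le> r\<^sup>2) \<longleftrightarrow> \<not> Aset r p (S.Xv \<omega>)"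
    proof -
      have "(\<exists>k. (ppp_point (\<lambda>l. W j l \<omega>) k)\<^sup>2 \<le> r\<^sup>2) \<longleftrightarrow> (W j 0 \<omega> \<le> r \<or> W j (-1) \<omega> \<le> r)" for j
        using ppp_near[of "\<lambda>l. W j l \<omega>" r] nnW r by simp
      then show ?thesis unfolding Aset_def xvW xvG xvV by (auto simp: not_less)
    qed
    have B: "(\<exists>i k. (ppp_point (\<lambda>i. G i \<omega>) i)\<^sup>2 + (ppp_point (\<lambda>l. V i l \<omega>) k)\<^sup>2 \<le> r\<^sup>2)
        \<longleftrightarrow> \<not> (\<forall>i. good r (ppp_point (\<lambda>i. G i \<omega>) i) (V i 0 \<omega>) (V i (-1) \<omega>))"
      using line_hit[of "\<lambda>l. V _ l \<omega>" r] nnV r by simp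
    have psp: "psum gp (S.Xv \<omega>) (Suc n) = ppp_point (\<lambda>i. G i \<omega>) (int n)" for n
      by (simp add: psum_def gp_def xvW xvG xvV ppp_point_def sum_pos_int)
    have psm: "psum gm (S.Xv \<omega>) (Suc n) = - ppp_point (\<lambda>i. G i \<omega>) (- int (Suc n))" for n
    proof -
      have "psum gm (S.Xv \<omega>) (Suc n) = (\<Sum>j<Suc n. G (-1 - int j) \<omega>)"
        by (simp add: psum_def gm_def xvW xvG xvV)
      also have "\<dots> = (\<Sum>j\<in>{- int (Suc n)..-1}. G j \<omega>)" by (rule sum_neg_int[symmetric])
      finally show ?thesis by (simp add: ppp_point_def)
    qed
    have Cp: "(\<forall>N. Hn r gp v0p v1p (S.Xv \<omega>) N) \<longleftrightarrow> (\<forall>n. good r (ppp_point (\<lambda>i. G i \<omega>) (int n)) (V (int n) 0 \<omega>) (V (int n) (-1) \<omega>))"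
      unfolding Hn_all psp by (simp add: xvW xvG xvV v0p_def v1p_def)
    have Cm: "(\<forall>N. Hn r gm v0m v1m (S.Xv \<omega>) N) \<longleftrightarrow> (\<forall>n. good r (ppp_point (\<lambda>i. G i \<omega>) (- int (Suc n))) (V (- int (Suc n)) 0 \<omega>) (V (- int (Suc n)) (-1) \<omega>))"
    proof -
      have "\<And>n. -1 - int n = - int (Suc n)" by simp
      then show ?thesis unfolding Hn_all psm good_neg by (simp add: xvW xvG xvV v0m_def v1m_def)
    qed
    have "(\<forall>N. NC N (S.Xv \<omega>)) \<longleftrightarrow> Aset r p (S.Xv \<omega>) \<and> (\<forall>N. Hn r gm v0m v1m (S.Xv \<omega>) N) \<and> (\<forall>N. Hn r gp v0p v1p (S.Xv \<omega>) N)"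
      unfolding NC_def by blast
    then show ?thesis unfolding OV_iff A B Cp Cm int_cases_all[where P="\<lambda>i. good r (ppp_point (\<lambda>i. G i \<omega>) i) (V i 0 \<omega>) (V i (-1) \<omega>)"]
      by blast
  qed
  have "measure M {\<omega> \<in> space M. OVP \<omega>} = measure M (space M - Cset)"
  proof (rule measure_eq_AE)
    show "AE \<omega> in M. \<omega> \<in> {\<omega> \<in> space M. OVP \<omega>} \<longleftrightarrow> \<omega> \<in> space M - Cset"
      using AEnn by eventually_elim (auto simp: key Cset_def)
  qed (use E_meas Cset_meas in auto)
  also have "\<dots> = 1 - measure M Cset" by (rule prob_compl[OF Cset_meas])
  also have "\<dots> = 1 - exp (- r * lam) ^ (2 * p) * F0 * F0" by (simp add: mC)
  also have "\<dots> = 1 - exp (- (real m * lam * r) - 2 * mu * (LBINT u=0..r. 1 - exp (- 2 * lam * sqrt (r\<^sup>2 - u\<^sup>2))))"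
  proof -
    have LB: "(LBINT u=0..r. 1 - exp (- 2 * lam * sqrt (r\<^sup>2 - u\<^sup>2))) = II lam r 0"
    proof -
      have "(LBINT u=0..r. 1 - exp (- 2 * lam * sqrt (r\<^sup>2 - u\<^sup>2))) = (LBINT u=ereal 0..ereal r. 1 - exp (- 2 * lam * sqrt (r\<^sup>2 - u\<^sup>2)))"
        by (simp add: zero_ereal_def)
      also have "\<dots> = II lam r 0"
        unfolding II_def hh_def
        by (rule interval_integral_eq_integral[OF r]) (intro borel_integrable_atLeastAtMost' continuous_intros)
      finally show ?thesis .
    qed
    have p2: "2 * p = m" using m by (auto simp: p_def)
    have "exp (- r * lam) ^ (2 * p) = exp (real m * (- r * lam))"
      unfolding p2 by (rule exp_of_nat_mult[symmetric])
    then have "exp (- r * lam) ^ (2 * p) * F0 * F0 = exp (real m * (- r * lam)) * exp (- mu * II lam r 0) * exp (- mu * II lam r 0)"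
      by (simp add: F0_def)
    also have "\<dots> = exp (real m * (- r * lam) + (- mu * II lam r 0) + (- mu * II lam r 0))"
      by (simp only: exp_add)
    also have "\<dots> = exp (- (real m * lam * r) - 2 * mu * II lam r 0)"
      by (rule arg_cong[where f=exp]) (simp add: algebra_simps)
    finally show ?thesis unfolding LB by simp
  qed
  finally show ?thesis unfolding OVP_def .
qed

end
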